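(* Let $E=\mathcal O_{\mathbb P^1}(a)\oplus\mathcal O_{\mathbb P^1}(b)$ with $1\le a\le b$. Then the closures of the nonempty strata satisfy \[\mathbb{R}_b(E)=\overline{\mathbb{R}_b(E)}\subset\overline{\mathbb{R}_a(E)}\subset\overline{\mathbb{R}_{a-1}(E)}\subset\cdots\subset\overline{\mathbb{R}_1(E)}.\] In particular the resonance $\mathbb{R}(E)$ is the closure of $\mathbb{R}_1(E)$, which is isomorphic to the image of $\mathbb P^1\times\mathbb P^{a+b-1}\to\mathbb P^{a+b+1}$ under the map $\theta_1$.
   Context: The resonance $\mathbb{R}(E):=\{[s]\in\mathbb{P}H^0(E):\exists\,t\in H^0(E),\ s\wedge t\neq0,\ \det(s\wedge t)=0\}$, where $\det:\bigwedge^2H^0(E)\to H^0(\det E)$ is the natural map; reduced structure. For a nonzero section $s$, $L_s$ is the saturation of the subsheaf generated by $s$, i.e. $\ker(E\to(E/\mathcal F)/\mathrm{tors})$ where $\mathcal F$ is the image of $s:\mathcal O\to E$; it is a line bundle. $\mathbb{R}_d(E):=\{[s]\in\mathbb{R}(E):\deg L_s=d\}$. The map $\theta_1:\mathbb{P}(H^0(\mathcal O_{\mathbb P^1}(1)))\times\mathbb{P}(H^0(E(-1)))\to\mathbb{P}(H^0(E))$ is induced by multiplication of sections, $([f],[\alpha])\mapsto[f\alpha]$; here $\mathbb{P}(H^0(\mathcal O(1)))\cong\mathbb P^1$, $\mathbb{P}(H^0(E(-1)))\cong\mathbb P^{a+b-1}$, $\mathbb{P}(H^0(E))\cong\mathbb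 P^{a+b+1}$. *)

theory Defs
  imports "HOL-Computational_Algebra.Polynomial"
begin

text \<open>Binary forms of degree n on P^1, dehomogenised (x0 = 1): H^0(O(n)).
  For n < 0 this is the zero space.\<close>
definition forms :: "int \<Rightarrow> complex poly set" where
  "forms n = {p. p = 0 \<or> int (degree p) \<le> n}"

definition sections :: "int \<Rightarrow> int \<Rightarrow> (complex poly \<times> complex poly) set" where
  "sections a b = forms a \<times> forms b"

text \<open>det : wedge^2 H^0(E) \<rightarrow> H^0(det E) = H^0(O(a+b)) on decomposable tensors.\<close>
definition det_wedge :: "complex poly \<times> complex poly \<Rightarrow> complex poly \<times> complex poly \<Rightarrow> complex poly" where
  "det_wedge s t = fst s * snd t - fst t * snd s"

definition wedge_nonzero :: "complex poly \<times> complex poly \<Rightarrow> complex poly \<times> complex poly \<Rightarrow> bool" where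
  "wedge_nonzero s t \<longleftrightarrow>
     (\<forall>c d :: complex. smult c (fst s) + smult d (fst t) = 0 \<and> smult c (snd s) + smult d (snd t) = 0
        \<longrightarrow> c = 0 \<and> d = 0)"

text \<open>Resonance, as the (scaling-invariant) cone of nonzero sections over R(E) in P H^0(E).\<close>
definition resonance :: "int \<Rightarrow> int \<Rightarrow> (complex poly \<times> complex poly) set" where
  "resonance a b = {s \<in> sections a b. s \<noteq> (0, 0) \<and>
      (\<exists>t \<in> sections a b. wedge_nonzero s t \<and> det_wedge s t = 0)}"

text \<open>deg L_s: the saturation of the subsheaf generated by s is O(d) with d the largest
  degree of a form h such that s = h * t with t a section of E(-d).\<close>
definition deg_L :: "int \<Rightarrow> int \<Rightarrow> complex poly \<times> complex poly \<Rightarrow> int" where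
  "deg_L a b s = (GREATEST d. \<exists>h \<in> forms d. h \<noteq> 0 \<and>
      (\<exists>t \<in> sections (a - d) (b - d). s = (h * fst t, h * snd t)))"

definition stratum :: "int \<Rightarrow> int \<Rightarrow> int \<Rightarrow> (complex poly \<times> complex poly) set" where
  "stratum a b d = {s \<in> resonance a b. deg_L a b s = d}"

inductive_set polyfun :: "('v \<Rightarrow> complex) set \<Rightarrow> ('v \<Rightarrow> complex) set" for C where
  pf_const: "(\<lambda>_. c) \<in> polyfun C"
| pf_coord: "x \<in> C \<Longrightarrow> x \<in> polyfun C"
| pf_add: "p \<in> polyfun C \<Longrightarrow> q \<in> polyfun C \<Longrightarrow> (\<lambda>v. p v + q v) \<in> polyfun C"
| pf_mult: "p \<in> polyfun C \<Longrightarrow> q \<in> polyfun C \<Longrightarrow> (\<lambda>v. p v * q v) \<in> polyfun C"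

text \<open>Coordinates on H^0(E) = C^(a+b+2): the coefficients of the two components.\<close>
definition coord_funs :: "int \<Rightarrow> int \<Rightarrow> (complex poly \<times> complex poly \<Rightarrow> complex) set" where
  "coord_funs a b = {(\<lambda>s. coeff (fst s) i) | i. int i \<le> a} \<union> {(\<lambda>s. coeff (snd s) j) | j. int j \<le> b}"

definition zariski_closure :: "'v set \<Rightarrow> ('v \<Rightarrow> complex) set \<Rightarrow> 'v set \<Rightarrow> 'v set" where
  "zariski_closure X C S = {v \<in> X. \<forall>P \<in> polyfun C. (\<forall>s \<in> S. P s = 0) \<longrightarrow> P v = 0}"

text \<open>Zariski closure in P H^0(E), computed on cones of nonzero vectors.\<close>
definition proj_closure :: "int \<Rightarrow> int \<Rightarrow> (complex poly \<times> complex poly) set \<Rightarrow> (complex poly \<times> complex poly) set" where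
  "proj_closure a b S = zariski_closure (sections a b - {(0, 0)}) (coord_funs a b) S"

text \<open>Cone over the image of theta_1 : P H^0(O(1)) x P H^0(E(-1)) \<rightarrow> P H^0(E).\<close>
definition theta1_image :: "int \<Rightarrow> int \<Rightarrow> (complex poly \<times> complex poly) set" where
  "theta1_image a b = {(h * fst \<alpha>, h * snd \<alpha>) | h \<alpha>.
      h \<in> forms 1 \<and> h \<noteq> 0 \<and> \<alpha> \<in> sections (a - 1) (b - 1) \<and> \<alpha> \<noteq> (0, 0)}"

end

theory Submission
  imports Defs "HOL-Computational_Algebra.Fundamental_Theorem_Algebra"
    "HOL-Computational_Algebra.Polynomial_Factorial" "HOL-Computational_Algebra.Field_as_Ring"
    "Jordan_Normal_Form.Determinant"
begin

definition Pd :: "int \<Rightarrow> int \<Rightarrow> int \<Rightarrow> complex poly \<times> complex poly \<Rightarrow> bool" where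
  "Pd a b d s \<longleftrightarrow> (\<exists>h \<in> forms d. h \<noteq> 0 \<and>
      (\<exists>t \<in> sections (a - d) (b - d). s = (h * fst t, h * snd t)))"

lemma deg_L_Pd: "deg_L a b s = (GREATEST d. Pd a b d s)"
  unfolding deg_L_def Pd_def by simp

definition kap :: "int \<Rightarrow> int \<Rightarrow> complex poly \<Rightarrow> complex poly \<Rightarrow> int" where
  "kap a b f g = (if f = 0 then b - int (degree g) else if g = 0 then a - int (degree f)
     else min (a - int (degree f)) (b - int (degree g)))"

lemma forms_iff: "p \<in> forms n \<longleftrightarrow> p = 0 \<or> int (degree p) \<le> n"
  unfolding forms_def by simp

lemma sections_iff: "(f, g) \<in> sections a b \<longleftrightarrow> f \<in> forms a \<and> g \<in> forms b"
  unfolding sections_def by simp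

lemma assoc_degree:
  fixes p q :: "complex poly"
  assumes "p dvd q" "q dvd p" "p \<noteq> 0"
  shows "degree p = degree q"
proof -
  have "q \<noteq> 0" using assms by auto
  then show ?thesis using assms dvd_imp_degree_le le_antisym by metis
qed

lemma degree_gcd_normalize:
  fixes p :: "complex poly"
  shows "degree (normalize p) = degree p"
  by (cases "p = 0") (auto intro: assoc_degree)

lemma Pd_bound:
  assumes "(f, g) \<noteq> (0, 0)" "Pd a b d (f, g)"
  shows "d \<le> int (degree (gcd f g)) + kap a b f g"
proof -
  obtain h t1 t2 where h: "h \<in> forms d" "h \<noteq> 0" and t: "(t1, t2) \<in> sections (a - d) (b - d)"
    and f: "f = h * t1" and g: "g = h * t2"
    using assms(2) unfolding Pd_def by auto
  have G0: "gcd f g \<noteq> 0" using assms(1) by auto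
  have "h dvd gcd f g" using f g by simp
  then have dh: "degree h \<le> degree (gcd f g)" using G0 dvd_imp_degree_le by blast
  have bf: "d \<le> int (degree (gcd f g)) + (a - int (degree f))" if "f \<noteq> 0"
  proof -
    have "t1 \<noteq> 0" using that f by auto
    then have "int (degree t1) \<le> a - d" using t by (auto simp: sections_iff forms_iff)
    moreover have "degree f = degree h + degree t1" using f h(2) \<open>t1 \<noteq> 0\<close> degree_mult_eq by blast
    ultimately show ?thesis using dh by linarith
  qed
  have bg: "d \<le> int (degree (gcd f g)) + (b - int (degree g))" if "g \<noteq> 0"
  proof -
    have "t2 \<noteq> 0" using that g by auto
    then have "int (degree t2) \<le> b - d" using t by (auto simp: sections_iff forms_iff)
    moreover have "degree g = degree h + degree t2" using g h(2) \<open>t2 \<noteq> 0\<close> degree_mult_eq by blast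
    ultimately show ?thesis using dh by linarith
  qed
  show ?thesis using bf bg assms(1) unfolding kap_def by auto
qed

lemma kap_nonneg:
  assumes "(f, g) \<in> sections a b" "(f, g) \<noteq> (0, 0)"
  shows "0 \<le> kap a b f g"
  using assms unfolding kap_def by (auto simp: sections_iff forms_iff)

lemma Pd_top:
  assumes "(f, g) \<in> sections a b" "(f, g) \<noteq> (0, 0)"
  shows "Pd a b (int (degree (gcd f g)) + kap a b f g) (f, g)"
proof -
  let ?G = "gcd f g"
  let ?n = "int (degree ?G) + kap a b f g"
  have G0: "?G \<noteq> 0" using assms(2) by auto
  obtain f' where f': "f = ?G * f'" by (meson dvd_def gcd_dvd1)
  obtain g' where g': "g = ?G * g'" by (meson dvd_def gcd_dvd2)
  have k0: "0 \<le> kap a b f g" using kap_nonneg[OF assms] .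
  have "?G \<in> forms ?n" using k0 by (simp add: forms_iff)
  moreover have "f' \<in> forms (a - ?n)"
  proof (cases "f = 0")
    case True then show ?thesis using f' G0 by (simp add: forms_iff)
  next
    case False
    then have "f' \<noteq> 0" using f' by auto
    then have "degree f = degree ?G + degree f'" using f' G0 degree_mult_eq by metis
    moreover have "kap a b f g \<le> a - int (degree f)" using False unfolding kap_def by auto
    ultimately show ?thesis by (simp add: forms_iff)
  qed
  moreover have "g' \<in> forms (b - ?n)"
  proof (cases "g = 0")
    case True then show ?thesis using g' G0 by (simp add: forms_iff)
  next
    case False
    then have "g' \<noteq> 0" using g' by auto
    then have "degree g = degree ?G + degree g'" using g' G0 degree_mult_eq by metis
    moreover have "kap a b f g \<le> b - int (degree g)" using False unfolding kap_def by auto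
    ultimately show ?thesis by (simp add: forms_iff)
  qed
  ultimately show ?thesis unfolding Pd_def using G0 f' g'
    by (intro bexI[of _ ?G]) (auto intro!: bexI[of _ "(f', g')"] simp: sections_iff)
qed

lemma deg_L_formula:
  assumes "(f, g) \<in> sections a b" "(f, g) \<noteq> (0, 0)"
  shows "deg_L a b (f, g) = int (degree (gcd f g)) + kap a b f g"
  unfolding deg_L_Pd
proof (rule Greatest_equality)
  show "Pd a b (int (degree (gcd f g)) + kap a b f g) (f, g)" by (rule Pd_top[OF assms])
  fix y assume "Pd a b y (f, g)"
  then show "y \<le> int (degree (gcd f g)) + kap a b f g" by (rule Pd_bound[OF assms(2)])
qed

lemma root_factor:
  fixes G :: "complex poly"
  assumes "degree G \<ge> 1"
  shows "\<exists>z. [:-z, 1:] dvd G"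
proof -
  have "\<not> constant (poly G)" using assms by (simp add: constant_degree)
  then obtain z where "poly G z = 0" using fundamental_theorem_of_algebra by blast
  then show ?thesis using poly_eq_0_iff_dvd by blast
qed

lemma degL_ge1_P1:
  assumes s: "(f, g) \<in> sections a b" "(f, g) \<noteq> (0, 0)" and d: "1 \<le> deg_L a b (f, g)"
  shows "Pd a b 1 (f, g)"
proof (cases "1 \<le> kap a b f g")
  case True
  have "f \<in> forms (a - 1)" using True s unfolding kap_def by (auto simp: forms_iff split: if_splits)
  moreover have "g \<in> forms (b - 1)" using True s unfolding kap_def by (auto simp: forms_iff split: if_splits)
  ultimately show ?thesis unfolding Pd_def
    by (intro bexI[of _ 1]) (auto intro!: bexI[of _ "(f, g)"] simp: sections_iff forms_iff)
next
  case False
  then have "degree (gcd f g) \<ge> 1" using d deg_L_formula[OF s] by linarith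
  then obtain z where "[:-z, 1:] dvd gcd f g" using root_factor by blast
  then have "[:-z, 1:] dvd f" "[:-z, 1:] dvd g" using dvd_trans by blast+
  then obtain f1 g1 where f1: "f = [:-z, 1:] * f1" and g1: "g = [:-z, 1:] * g1" by (meson dvdE)
  have "f1 \<in> forms (a - 1)"
  proof (cases "f1 = 0")
    case False
    then have "degree f = degree [:-z, 1:] + degree f1" using f1 by (metis degree_mult_eq pCons_eq_0_iff zero_neq_one)
    then have "degree f = 1 + degree f1" by simp
    moreover have "f \<noteq> 0" using f1 False by (metis mult_eq_0_iff pCons_eq_0_iff zero_neq_one)
    then have "int (degree f) \<le> a" using s by (auto simp: sections_iff forms_iff)
    ultimately show ?thesis by (simp add: forms_iff)
  qed (simp add: forms_iff)
  moreover have "g1 \<in> forms (b - 1)"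
  proof (cases "g1 = 0")
    case False
    then have "degree g = degree [:-z, 1:] + degree g1" using g1 by (metis degree_mult_eq pCons_eq_0_iff zero_neq_one)
    then have "degree g = 1 + degree g1" by simp
    moreover have "g \<noteq> 0" using g1 False by (metis mult_eq_0_iff pCons_eq_0_iff zero_neq_one)
    then have "int (degree g) \<le> b" using s by (auto simp: sections_iff forms_iff)
    ultimately show ?thesis by (simp add: forms_iff)
  qed (simp add: forms_iff)
  ultimately show ?thesis unfolding Pd_def using f1 g1
    by (intro bexI[of _ "[:-z, 1:]"]) (auto intro!: bexI[of _ "(f1, g1)"] simp: sections_iff forms_iff)
qed

lemma Pd1_degL:
  assumes s: "(f, g) \<in> sections a b" "(f, g) \<noteq> (0, 0)" and P: "Pd a b 1 (f, g)"
  shows "1 \<le> deg_L a b (f, g)"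
  using Pd_bound[OF s(2) P] deg_L_formula[OF s] by simp

lemma smult_pair_not_wedge:
  "\<not> wedge_nonzero (f, g) (Polynomial.smult \<mu> f, Polynomial.smult \<mu> g)"
  unfolding wedge_nonzero_def
  apply (simp only: not_all not_imp)
  apply (rule exI[of _ \<mu>], rule exI[of _ "-1"])
  by simp

lemma Pd1_sections:
  assumes "Pd a b 1 (f, g)"
  shows "(f, g) \<in> sections a b"
proof -
  obtain h t1 t2 where h: "h \<in> forms 1" "h \<noteq> 0" and t: "(t1, t2) \<in> sections (a - 1) (b - 1)"
    and f: "f = h * t1" and g: "g = h * t2"
    using assms unfolding Pd_def by auto
  have "f \<in> forms a"
  proof (cases "t1 = 0")
    case False
    then have "degree f = degree h + degree t1" using f h degree_mult_eq by blast
    then show ?thesis using h t False by (auto simp: forms_iff sections_iff)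
  qed (simp add: f forms_iff)
  moreover have "g \<in> forms b"
  proof (cases "t2 = 0")
    case False
    then have "degree g = degree h + degree t2" using g h degree_mult_eq by blast
    then show ?thesis using h t False by (auto simp: forms_iff sections_iff)
  qed (simp add: g forms_iff)
  ultimately show ?thesis by (simp add: sections_iff)
qed

lemma P1_res:
  assumes nz: "(f, g) \<noteq> (0, 0)" and P: "Pd a b 1 (f, g)"
  shows "(f, g) \<in> resonance a b"
proof -
  obtain h t1 t2 where h: "h \<in> forms 1" "h \<noteq> 0" and t: "(t1, t2) \<in> sections (a - 1) (b - 1)"
    and f: "f = h * t1" and g: "g = h * t2"
    using P unfolding Pd_def by auto
  define h' :: "complex poly" where "h' = (if degree h = 0 then [:0, 1:] else 1)"
  have h'1: "h' \<in> forms 1" unfolding h'_def by (auto simp: forms_iff)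
  have indep: "c = 0 \<and> d = 0" if "Polynomial.smult c h + Polynomial.smult d h' = 0" for c d
  proof (cases "degree h = 0")
    case True
    then obtain h0 where "h = [:h0:]" using degree0_coeffs by blast
    then have "h0 \<noteq> 0" using h by auto
    have "Polynomial.smult c h + Polynomial.smult d h' = [:c * h0, d:]" using True \<open>h = [:h0:]\<close> unfolding h'_def by simp
    then show ?thesis using that \<open>h0 \<noteq> 0\<close> by simp
  next
    case False
    then have "degree h = 1" using h by (auto simp: forms_iff)
    have "coeff (Polynomial.smult c h + Polynomial.smult d h') 1 = c * coeff h 1" using False unfolding h'_def by simp
    moreover have "coeff h 1 \<noteq> 0" using \<open>degree h = 1\<close> h(2) by (metis leading_coeff_0_iff)
    ultimately have "c = 0" using that by simp
    then have "Polynomial.smult d 1 = 0" using that False unfolding h'_def by simp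
    then have "d = 0" by simp
    then show ?thesis using \<open>c = 0\<close> by simp
  qed
  have t0: "(t1, t2) \<noteq> (0, 0)" using nz f g by auto
  have sec: "(h' * t1, h' * t2) \<in> sections (a - 1 + 1) (b - 1 + 1)"
    using Pd1_sections[of "a - 1 + 1" "b - 1 + 1" "h' * t1" "h' * t2"] h'1 t h
    unfolding Pd_def
    by (smt (verit) Pd_def h'1 pCons_eq_0_iff prod.sel(1) prod.sel(2) zero_neq_one h'_def t)
  have "(f, g) \<in> sections a b" using Pd1_sections[OF P] .
  moreover have "wedge_nonzero (f, g) (h' * t1, h' * t2)"
    unfolding wedge_nonzero_def
  proof (intro allI impI)
    fix c d :: complex
    assume "Polynomial.smult c (fst (f, g)) + Polynomial.smult d (fst (h' * t1, h' * t2)) = 0 \<and>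
            Polynomial.smult c (snd (f, g)) + Polynomial.smult d (snd (h' * t1, h' * t2)) = 0"
    then have e1: "(Polynomial.smult c h + Polynomial.smult d h') * t1 = 0" and e2: "(Polynomial.smult c h + Polynomial.smult d h') * t2 = 0"
      using f g by (simp_all add: algebra_simps)
    have "Polynomial.smult c h + Polynomial.smult d h' = 0" using e1 e2 t0 by auto
    then show "c = 0 \<and> d = 0" using indep by blast
  qed
  moreover have "det_wedge (f, g) (h' * t1, h' * t2) = 0"
    unfolding det_wedge_def f g by (simp add: algebra_simps)
  ultimately show ?thesis unfolding resonance_def using nz sec by auto
qed

lemma not_wedge_if_mult:
  assumes "t1 = m * f" "t2 = m * g" "degree m = 0"
  shows "\<not> wedge_nonzero (f, g) (t1, t2)"
proof -
  obtain \<mu> where "m = [:\<mu>:]" using assms(3) degree0_coeffs by blast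
  then have "t1 = Polynomial.smult \<mu> f" "t2 = Polynomial.smult \<mu> g" using assms by auto
  then show ?thesis using smult_pair_not_wedge by simp
qed

lemma res_degL:
  assumes r: "(f, g) \<in> resonance a b" and a1: "1 \<le> a" and b1: "1 \<le> b"
  shows "1 \<le> deg_L a b (f, g)"
proof (rule ccontr)
  assume "\<not> 1 \<le> deg_L a b (f, g)"
  have s: "(f, g) \<in> sections a b" "(f, g) \<noteq> (0, 0)" using r unfolding resonance_def by auto
  obtain t1 t2 where t: "(t1, t2) \<in> sections a b" and w: "wedge_nonzero (f, g) (t1, t2)"
    and dw: "f * t2 - t1 * g = 0"
    using r unfolding resonance_def det_wedge_def by auto
  have k0: "0 \<le> kap a b f g" using kap_nonneg[OF s] .
  have dl: "deg_L a b (f, g) = int (degree (gcd f g)) + kap a b f g" using deg_L_formula[OF s] .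
  have G: "degree (gcd f g) = 0" and k: "kap a b f g = 0"
    using dl k0 \<open>\<not> 1 \<le> deg_L a b (f, g)\<close> by linarith+
  have f0: "f \<noteq> 0"
  proof
    assume "f = 0"
    then have "degree (gcd f g) = degree g" using degree_gcd_normalize by simp
    then show False using G k b1 \<open>f = 0\<close> unfolding kap_def by simp
  qed
  have g0: "g \<noteq> 0"
  proof
    assume "g = 0"
    then have "degree (gcd f g) = degree f" using degree_gcd_normalize by simp
    then show False using G k a1 \<open>g = 0\<close> f0 unfolding kap_def by simp
  qed
  have "gcd f g \<noteq> 0" using f0 by simp
  then have "is_unit (gcd f g)" using G is_unit_iff_degree by blast
  then have cop: "coprime f g" using is_unit_gcd by blast
  have eq: "f * t2 = t1 * g" using dw by simp
  have "min (a - int (degree f)) (b - int (degree g)) = 0" using k f0 g0 unfolding kap_def by simp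
  then have "int (degree f) = a \<or> int (degree g) = b" by linarith
  then show False
  proof
    assume da: "int (degree f) = a"
    have "f dvd t1 * g" using eq by (metis dvd_triv_left)
    then have "f dvd t1" using cop by (simp add: coprime_dvd_mult_left_iff)
    then obtain m where m: "t1 = m * f" by (metis dvdE mult.commute)
    have "f * t2 = f * (m * g)" using eq m by (simp add: algebra_simps)
    then have "t2 = m * g" using mult_left_cancel[OF f0] by blast
    have "degree m = 0"
    proof (cases "m = 0")
      case False
      then have "t1 \<noteq> 0" using m f0 by simp
      then have "int (degree t1) \<le> a" using t by (auto simp: sections_iff forms_iff)
      moreover have "degree t1 = degree m + degree f" using m False f0 degree_mult_eq by blast
      ultimately show ?thesis using da by simp
    qed simp
    then show False using not_wedge_if_mult[OF m \<open>t2 = m * g\<close>] w by simp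
  next
    assume db: "int (degree g) = b"
    have "g dvd f * t2" using eq by (metis dvd_triv_right)
    then have "g dvd t2" using cop by (simp add: coprime_commute coprime_dvd_mult_right_iff)
    then obtain m where m: "t2 = m * g" by (metis dvdE mult.commute)
    have "g * t1 = f * t2" using eq by (simp add: mult.commute)
    also have "\<dots> = g * (m * f)" using m by (simp add: ac_simps)
    finally have "g * t1 = g * (m * f)" .
    then have "t1 = m * f" using mult_left_cancel[OF g0] by blast
    have "degree m = 0"
    proof (cases "m = 0")
      case False
      then have "t2 \<noteq> 0" using m g0 by simp
      then have "int (degree t2) \<le> b" using t by (auto simp: sections_iff forms_iff)
      moreover have "degree t2 = degree m + degree g" using m False g0 degree_mult_eq by blast
      ultimately show ?thesis using db by simp
    qed simp
    then show False using not_wedge_if_mult[OF \<open>t1 = m * f\<close> m] w by simp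
  qed
qed

lemma res_iff:
  assumes "1 \<le> a" "1 \<le> b"
  shows "(f, g) \<in> resonance a b \<longleftrightarrow> (f, g) \<in> sections a b \<and> (f, g) \<noteq> (0, 0) \<and> 1 \<le> deg_L a b (f, g)"
proof
  assume r: "(f, g) \<in> resonance a b"
  then show "(f, g) \<in> sections a b \<and> (f, g) \<noteq> (0, 0) \<and> 1 \<le> deg_L a b (f, g)"
    using res_degL[OF r assms] unfolding resonance_def by auto
next
  assume "(f, g) \<in> sections a b \<and> (f, g) \<noteq> (0, 0) \<and> 1 \<le> deg_L a b (f, g)"
  then show "(f, g) \<in> resonance a b" using degL_ge1_P1 P1_res by blast
qed


definition lin :: "complex poly \<times> complex poly \<Rightarrow> complex poly \<times> complex poly \<Rightarrow> complex \<Rightarrow> complex poly \<times> complex poly" where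
  "lin s w c = (fst s + Polynomial.smult c (fst w), snd s + Polynomial.smult c (snd w))"

lemma polyfun_line:
  assumes "P \<in> polyfun (coord_funs a b)"
  shows "\<exists>q. \<forall>c. P (lin s w c) = poly q c"
  using assms
proof (induction rule: polyfun.induct)
  case (pf_const c)
  then show ?case by (intro exI[of _ "[:c:]"]) simp
next
  case (pf_coord x)
  then show ?case
  proof (cases rule: UnE[OF pf_coord[unfolded coord_funs_def]])
    case 1
    then obtain i where "x = (\<lambda>s. coeff (fst s) i)" by auto
    then show ?thesis
      by (intro exI[of _ "[:coeff (fst s) i, coeff (fst w) i:]"]) (simp add: lin_def)
  next
    case 2
    then obtain i where "x = (\<lambda>s. coeff (snd s) i)" by auto
    then show ?thesis
      by (intro exI[of _ "[:coeff (snd s) i, coeff (snd w) i:]"]) (simp add: lin_def)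
  qed
next
  case (pf_add p q)
  then obtain q1 q2 where "\<forall>c. p (lin s w c) = poly q1 c" "\<forall>c. q (lin s w c) = poly q2 c" by blast
  then show ?case by (intro exI[of _ "q1 + q2"]) simp
next
  case (pf_mult p q)
  then obtain q1 q2 where "\<forall>c. p (lin s w c) = poly q1 c" "\<forall>c. q (lin s w c) = poly q2 c" by blast
  then show ?case by (intro exI[of _ "q1 * q2"]) simp
qed

lemma poly_zero_cofinite:
  fixes q :: "complex poly"
  assumes "\<forall>c. c \<noteq> 0 \<longrightarrow> poly q c = 0"
  shows "poly q 0 = 0"
proof (cases "q = 0")
  case False
  then have "finite {c. poly q c = 0}" using poly_roots_finite by blast
  moreover have "UNIV - {0} \<subseteq> {c. poly q c = 0}" using assms by auto
  ultimately have "finite (UNIV - {0::complex})" using finite_subset by blast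
  then show ?thesis using infinite_UNIV_char_0 by auto
qed simp

lemma closure_line:
  assumes s: "s \<in> sections a b" "s \<noteq> (0, 0)" and fam: "\<forall>c. c \<noteq> 0 \<longrightarrow> lin s w c \<in> S"
  shows "s \<in> proj_closure a b S"
  unfolding proj_closure_def zariski_closure_def
proof (intro CollectI conjI ballI impI)
  show "s \<in> sections a b - {(0, 0)}" using s by simp
  fix P assume P: "P \<in> polyfun (coord_funs a b)" and v: "\<forall>x\<in>S. P x = 0"
  obtain q where q: "\<forall>c. P (lin s w c) = poly q c" using polyfun_line[OF P] by blast
  have "\<forall>c. c \<noteq> 0 \<longrightarrow> poly q c = 0" using q v fam by metis
  then have "poly q 0 = 0" by (rule poly_zero_cofinite)
  moreover have "lin s w 0 = s" by (simp add: lin_def)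
  ultimately show "P s = 0" using q by metis
qed

lemma closure_sub: "proj_closure a b S \<subseteq> sections a b - {(0, 0)}"
  unfolding proj_closure_def zariski_closure_def by auto

lemma closure_incl: "S \<subseteq> sections a b - {(0, 0)} \<Longrightarrow> S \<subseteq> proj_closure a b S"
  unfolding proj_closure_def zariski_closure_def by auto

lemma closure_trans: "S \<subseteq> proj_closure a b T \<Longrightarrow> proj_closure a b S \<subseteq> proj_closure a b T"
  unfolding proj_closure_def zariski_closure_def by blast

lemma closure_poly:
  assumes "v \<in> proj_closure a b S" "P \<in> polyfun (coord_funs a b)" "\<forall>x\<in>S. P x = 0"
  shows "P v = 0"
  using assms unfolding proj_closure_def zariski_closure_def by blast

lemma coord_fst: "int i \<le> a \<Longrightarrow> (\<lambda>s. coeff (fst s) i) \<in> polyfun (coord_funs a b)"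
  by (rule pf_coord) (auto simp: coord_funs_def)

lemma coord_snd: "int i \<le> b \<Longrightarrow> (\<lambda>s. coeff (snd s) i) \<in> polyfun (coord_funs a b)"
  by (rule pf_coord) (auto simp: coord_funs_def)


lemma bezout_deg:
  fixes f g :: "complex poly"
  assumes cop: "coprime f g" and nz: "f \<noteq> 0 \<or> g \<noteq> 0"
  shows "\<exists>A B. A * f + B * g = 1 \<and> degree A \<le> degree g \<and> degree B \<le> degree f"
proof (cases "g = 0")
  case True
  then have "is_unit f" using cop by simp
  then obtain A where "A * f = 1" by (metis dvd_def mult.commute)
  moreover have "degree A = 0"
  proof -
    have "A \<noteq> 0" "f \<noteq> 0" using \<open>A * f = 1\<close> by auto
    then have "degree (A * f) = degree A + degree f" by (rule degree_mult_eq)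
    then show ?thesis using \<open>A * f = 1\<close> by simp
  qed
  ultimately show ?thesis using True by (intro exI[of _ A] exI[of _ 0]) simp
next
  case False
  obtain A0 B0 where ab: "A0 * f + B0 * g = gcd f g"
    using bezout_coefficients_fst_snd by blast
  have "gcd f g = 1" using cop by (simp add: coprime_iff_gcd_eq_1)
  define A where "A = A0 mod g"
  define B where "B = B0 + (A0 div g) * f"
  have eq: "A * f + B * g = 1"
  proof -
    have "A * f + B * g = ((A0 div g) * g + A0 mod g) * f + B0 * g" unfolding A_def B_def
      by (simp only: algebra_simps)
    also have "\<dots> = A0 * f + B0 * g" by (simp only: div_mult_mod_eq)
    finally have "A * f + B * g = A0 * f + B0 * g" .
    then show ?thesis using ab \<open>gcd f g = 1\<close> by simp
  qed
  have dA: "A = 0 \<or> degree A < degree g" unfolding A_def using degree_mod_less[OF False] by blast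
  have dB: "degree B \<le> degree f"
  proof (cases "B = 0")
    case nB: False
    have Bg: "degree (B * g) = degree B + degree g" using nB False degree_mult_eq by blast
    show ?thesis
    proof (cases "A = 0 \<or> f = 0")
      case True
      then have "B * g = 1" using eq by auto
      then have "degree B + degree g = 0" using Bg by simp
      then show ?thesis by simp
    next
      case nA: False
      then have "degree (A * f) = degree A + degree f" using degree_mult_eq by blast
      moreover have "B * g = 1 - A * f" using eq by (simp add: algebra_simps)
      then have "degree (B * g) \<le> max (degree (1::complex poly)) (degree (A * f))"
        using degree_diff_le_max by metis
      ultimately have "degree B + degree g \<le> degree A + degree f" using Bg by simp
      moreover have "degree A < degree g" using dA nA by blast
      ultimately show ?thesis by linarith
    qed
  qed simp
  show ?thesis using eq dA dB by (intro exI[of _ A] exI[of _ B]) auto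
qed

lemma divisor_degree:
  fixes g :: "complex poly"
  assumes "g \<noteq> 0"
  shows "n \<le> degree g \<Longrightarrow> \<exists>p. p dvd g \<and> degree p = n"
proof (induction n)
  case 0
  then show ?case by (intro exI[of _ 1]) simp
next
  case (Suc n)
  then obtain p where p: "p dvd g" "degree p = n" by auto
  then obtain r where r: "g = p * r" by (metis dvdE)
  have "p \<noteq> 0" "r \<noteq> 0" using r assms by auto
  then have "degree g = n + degree r" using r p degree_mult_eq by metis
  then have "degree r \<ge> 1" using Suc.prems by simp
  then obtain z where "[:-z, 1:] dvd r" using root_factor by blast
  then have "p * [:-z, 1:] dvd p * r" by (rule mult_dvd_mono[OF dvd_refl])
  then have "p * [:-z, 1:] dvd g" by (simp only: r)
  moreover have "degree (p * [:-z, 1:]) = Suc n"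
    using \<open>p \<noteq> 0\<close> p(2) by (subst degree_mult_eq) auto
  ultimately show ?case by blast
qed


lemma coprime_from_comb:
  fixes F H u v :: "complex poly"
  assumes "u * F + v * H = [:c:]" "c \<noteq> 0"
  shows "coprime F H"
proof (rule coprimeI)
  fix d assume "d dvd F" "d dvd H"
  then have "d dvd u * F + v * H" by simp
  then have "d dvd [:c:]" using assms by simp
  moreover have "is_unit [:c:]" using assms(2) by (simp add: is_unit_const_poly_iff dvd_field_iff)
  ultimately show "is_unit d" using dvd_unit_imp_unit by blast
qed

lemma family_core:
  fixes f g Gq l m f' g' A B :: "complex poly"
  assumes a1: "1 \<le> a" and ab: "a \<le> b" and s: "(f, g) \<in> sections a b" "(f, g) \<noteq> (0, 0)"
    and nA: "deg_L a b (f, g) \<le> a"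
    and dG: "degree (gcd f g) = degree l + degree Gq" and lG: "l * Gq \<noteq> 0"
    and f: "f = l * Gq * f'" and g: "g = l * Gq * g'"
    and cop: "coprime f' g'"
    and bz: "A * f' + B * g' = 1" "degree A \<le> degree g'" "degree B \<le> degree f'"
    and Ldeg: "\<forall>c. c \<noteq> 0 \<longrightarrow> degree (l + Polynomial.smult c m) = 1"
    and kl: "1 \<le> kap a b f g + int (degree l)"
    and c: "c \<noteq> 0"
  shows "lin (f, g) (Gq * (m * f' + B), Gq * (m * g' - A)) c \<in> sections a b
    \<and> lin (f, g) (Gq * (m * f' + B), Gq * (m * g' - A)) c \<noteq> (0, 0)
    \<and> deg_L a b (lin (f, g) (Gq * (m * f' + B), Gq * (m * g' - A)) c) = deg_L a b (f, g) - 1"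
proof -
  define L where "L = l + Polynomial.smult c m"
  define F where "F = L * f' + Polynomial.smult c B"
  define H where "H = L * g' - Polynomial.smult c A"
  have l0: "l \<noteq> 0" and Gq0: "Gq \<noteq> 0" using lG by auto
  have dL: "degree L = 1" using Ldeg c unfolding L_def by auto
  then have L0: "L \<noteq> 0" by auto
  have lin_eq: "lin (f, g) (Gq * (m * f' + B), Gq * (m * g' - A)) c = (Gq * F, Gq * H)"
    unfolding lin_def F_def H_def L_def f g by (simp add: algebra_simps smult_add_right smult_diff_right)
  have "g' * F - f' * H = Polynomial.smult c (A * f' + B * g')"
    unfolding F_def H_def by (simp add: algebra_simps smult_add_right smult_diff_right)
  then have "g' * F + (- f') * H = [:c:]" using bz(1) by simp
  then have copFH: "coprime F H" using coprime_from_comb c by blast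
  then have "gcd F H = 1" by (simp add: coprime_iff_gcd_eq_1)
  then have gcdFH: "degree (gcd (Gq * F) (Gq * H)) = degree Gq"
    by (simp add: gcd_mult_left degree_gcd_normalize)
  have dF: "F \<noteq> 0 \<and> degree F = degree f' + 1" if "f' \<noteq> 0"
  proof -
    have d1: "degree (L * f') = degree f' + 1" using dL degree_mult_eq[OF L0 that] by simp
    have "degree (Polynomial.smult c B) < degree (L * f')" using d1 bz(3) degree_smult_le le_less_trans
      by (metis less_add_one)
    then have "degree F = degree (L * f')" unfolding F_def by (rule degree_add_eq_left)
    then show ?thesis using d1 by auto
  qed
  have dF0: "F \<noteq> 0 \<and> degree F = 0" if "f' = 0"
  proof -
    have "is_unit g'" using cop that by simp
    have "B * g' = 1" using bz(1) that by simp
    then have "B \<noteq> 0" "g' \<noteq> 0" by auto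
    then have "degree B + degree g' = 0" using \<open>B * g' = 1\<close> degree_mult_eq by (metis degree_1)
    then show ?thesis using \<open>B \<noteq> 0\<close> c unfolding F_def that by simp
  qed
  have dH: "H \<noteq> 0 \<and> degree H = degree g' + 1" if "g' \<noteq> 0"
  proof -
    have d1: "degree (L * g') = degree g' + 1" using dL degree_mult_eq[OF L0 that] by simp
    have "degree (Polynomial.smult c A) < degree (L * g')" using d1 bz(2) degree_smult_le le_less_trans
      by (metis less_add_one)
    then have "degree H = degree (L * g')" unfolding H_def
      using degree_add_eq_left[of "- Polynomial.smult c A" "L * g'"] by simp
    then show ?thesis using d1 by auto
  qed
  have dH0: "H \<noteq> 0 \<and> degree H = 0" if "g' = 0"
  proof -
    have "A * f' = 1" using bz(1) that by simp
    then have "A \<noteq> 0" "f' \<noteq> 0" by auto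
    then have "degree A + degree f' = 0" using \<open>A * f' = 1\<close> degree_mult_eq by (metis degree_1)
    then show ?thesis using \<open>A \<noteq> 0\<close> c unfolding H_def that by simp
  qed
  have fz: "f = 0 \<longleftrightarrow> f' = 0" using f lG by simp
  have gz: "g = 0 \<longleftrightarrow> g' = 0" using g lG by simp
  have df: "degree f = degree l + degree Gq + degree f'" if "f' \<noteq> 0"
    using f that lG l0 Gq0 by (simp add: degree_mult_eq)
  have dg: "degree g = degree l + degree Gq + degree g'" if "g' \<noteq> 0"
    using g that lG l0 Gq0 by (simp add: degree_mult_eq)
  have dGF: "degree (Gq * F) = degree Gq + degree F" if "F \<noteq> 0" using that Gq0 degree_mult_eq by blast
  have dGH: "degree (Gq * H) = degree Gq + degree H" if "H \<noteq> 0" using that Gq0 degree_mult_eq by blast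
  have dl: "deg_L a b (f, g) = int (degree (gcd f g)) + kap a b f g" using deg_L_formula[OF s] .
  have fa: "int (degree f) \<le> a" and gb: "int (degree g) \<le> b" using s a1 ab by (auto simp: sections_iff forms_iff)
  have F0: "F \<noteq> 0" using dF dF0 by blast
  have H0: "H \<noteq> 0" using dH dH0 by blast
  have sec: "(Gq * F, Gq * H) \<in> sections a b \<and> kap a b (Gq * F) (Gq * H) = kap a b f g + int (degree l) - 1"
  proof (cases "f' = 0")
    case True
    then have g'0: "g' \<noteq> 0" using s fz gz by auto
    have "is_unit g'" using cop True by simp
    then have "degree g' = 0" using g'0 is_unit_iff_degree by blast
    have kf: "kap a b f g = b - int (degree g)" using True fz unfolding kap_def by simp
    have "deg_L a b (f, g) = b" using dl kf dG dg[OF g'0] \<open>degree g' = 0\<close> by simp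
    then have "b \<le> a" using nA by simp
    show ?thesis using dF0[OF True] dH[OF g'0] dGF dGH dg[OF g'0] \<open>degree g' = 0\<close> kf kl gb \<open>b \<le> a\<close> ab
      unfolding kap_def by (auto simp: sections_iff forms_iff F0 H0 mult_eq_0_iff)
  next
    case False
    note f'0 = False
    show ?thesis
    proof (cases "g' = 0")
      case True
      have kf: "kap a b f g = a - int (degree f)" using True f'0 fz gz unfolding kap_def by simp
      show ?thesis using dF[OF f'0] dH0[OF True] dGF dGH df[OF f'0] kf kl fa ab
        unfolding kap_def by (auto simp: sections_iff forms_iff F0 H0 mult_eq_0_iff)
    next
      case False
      have kf: "kap a b f g = min (a - int (degree f)) (b - int (degree g))"
        using False f'0 fz gz unfolding kap_def by simp
      show ?thesis using dF[OF f'0] dH[OF False] dGF dGH df[OF f'0] dg[OF False] kf kl fa gb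
        unfolding kap_def by (auto simp: sections_iff forms_iff F0 H0 mult_eq_0_iff)
    qed
  qed
  have nz: "(Gq * F, Gq * H) \<noteq> (0, 0)" using F0 Gq0 by simp
  have "deg_L a b (Gq * F, Gq * H) = int (degree Gq) + kap a b (Gq * F) (Gq * H)"
    using deg_L_formula[OF conjunct1[OF sec] nz] gcdFH by simp
  then have "deg_L a b (Gq * F, Gq * H) = deg_L a b (f, g) - 1" using sec dl dG by simp
  then show ?thesis using lin_eq sec nz by simp
qed

lemma family_down:
  assumes a1: "1 \<le> a" and ab: "a \<le> b" and s: "(f, g) \<in> sections a b" "(f, g) \<noteq> (0, 0)"
    and nA: "deg_L a b (f, g) \<le> a" and n2: "2 \<le> deg_L a b (f, g)"
  shows "\<exists>w. \<forall>c. c \<noteq> 0 \<longrightarrow> lin (f, g) w c \<in> sections a b \<and> lin (f, g) w c \<noteq> (0, 0)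
           \<and> deg_L a b (lin (f, g) w c) = deg_L a b (f, g) - 1"
proof -
  define G where "G = gcd f g"
  have G0: "G \<noteq> 0" using s unfolding G_def by auto
  define f' where "f' = f div G"
  define g' where "g' = g div G"
  have f: "f = G * f'" unfolding f'_def G_def by simp
  have g: "g = G * g'" unfolding g'_def G_def by simp
  have cop: "coprime f' g'" unfolding f'_def g'_def G_def using s div_gcd_coprime by auto
  have "f' \<noteq> 0 \<or> g' \<noteq> 0" using s f g by auto
  then obtain A B where bz: "A * f' + B * g' = 1" "degree A \<le> degree g'" "degree B \<le> degree f'"
    using bezout_deg[OF cop] by blast
  have dl: "deg_L a b (f, g) = int (degree G) + kap a b f g" using deg_L_formula[OF s] G_def by simp
  have k0: "0 \<le> kap a b f g" using kap_nonneg[OF s] .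
  show ?thesis
  proof (cases "1 \<le> kap a b f g")
    case True
    have L: "\<forall>c. c \<noteq> 0 \<longrightarrow> degree (1 + Polynomial.smult c [:0, 1:]) = 1" by (simp add: one_pCons)
    have h1: "degree (gcd f g) = degree (1::complex poly) + degree G" unfolding G_def by simp
    have h2: "1 * G \<noteq> 0" using G0 by simp
    have h3: "f = 1 * G * f'" "g = 1 * G * g'" using f g by simp_all
    have h4: "1 \<le> kap a b f g + int (degree (1::complex poly))" using True by simp
    show ?thesis
      using family_core[OF a1 ab s nA h1 h2 h3 cop bz L h4] by blast
  next
    case False
    then have "degree G \<ge> 1" using dl n2 by linarith
    then obtain z where "[:-z, 1:] dvd G" using root_factor by blast
    then obtain G1 where G1: "G = [:-z, 1:] * G1" by (metis dvdE)
    have G10: "G1 \<noteq> 0" using G1 G0 by auto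
    have dG: "degree G = degree [:-z, 1:] + degree G1" using G1 G10 by (metis degree_mult_eq pCons_eq_0_iff zero_neq_one)
    have L: "\<forall>c. c \<noteq> 0 \<longrightarrow> degree ([:-z, 1:] + Polynomial.smult c 1) = 1" by (simp add: one_pCons)
    have h1: "degree (gcd f g) = degree [:-z, 1:] + degree G1" using dG unfolding G_def by simp
    have h2: "[:-z, 1:] * G1 \<noteq> 0" using G0 G1 by simp
    have h3: "f = [:-z, 1:] * G1 * f'" "g = [:-z, 1:] * G1 * g'" using f g G1 by simp_all
    have h4: "1 \<le> kap a b f g + int (degree [:-z, 1:])" using k0 by simp
    show ?thesis
      using family_core[OF a1 ab s nA h1 h2 h3 cop bz L h4] by blast
  qed
qed

lemma family_b:
  assumes a1: "1 \<le> a" and ab: "a \<le> b" and g0: "g \<noteq> 0" and gb: "int (degree g) \<le> b"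
  shows "\<exists>w. \<forall>c. c \<noteq> 0 \<longrightarrow> lin (0, g) w c \<in> sections a b \<and> lin (0, g) w c \<noteq> (0, 0)
           \<and> deg_L a b (lin (0, g) w c) = a"
proof -
  obtain p where p: "p dvd g" "degree p = min (nat a) (degree g)"
    using divisor_degree[OF g0, of "min (nat a) (degree g)"] by auto
  have p0: "p \<noteq> 0" using p g0 by auto
  show ?thesis
  proof (intro exI allI impI)
    fix c :: complex assume c: "c \<noteq> 0"
    have eq: "lin (0, g) (p, 0) c = (Polynomial.smult c p, g)" by (simp add: lin_def)
    have sec: "(Polynomial.smult c p, g) \<in> sections a b" using p gb a1 by (auto simp: sections_iff forms_iff)
    have nz: "(Polynomial.smult c p, g) \<noteq> (0, 0)" using g0 by simp
    have "Polynomial.smult c p dvd g" using p(1) c by (simp add: smult_dvd_iff)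
    then have "gcd (Polynomial.smult c p) g = normalize (Polynomial.smult c p)" by (simp add: gcd_proj1_iff)
    then have dg: "degree (gcd (Polynomial.smult c p) g) = degree p" using c by (simp add: degree_gcd_normalize)
    have "kap a b (Polynomial.smult c p) g = min (a - int (degree p)) (b - int (degree g))"
      using c p0 g0 unfolding kap_def by simp
    then have "deg_L a b (Polynomial.smult c p, g) = a"
      using deg_L_formula[OF sec nz] dg p(2) ab a1 gb by auto
    then show "lin (0, g) (p, 0) c \<in> sections a b \<and> lin (0, g) (p, 0) c \<noteq> (0, 0)
           \<and> deg_L a b (lin (0, g) (p, 0) c) = a" using eq sec nz by simp
  qed
qed


lemma polyfun_sum:
  assumes "finite A" "\<And>x. x \<in> A \<Longrightarrow> F x \<in> polyfun C"
  shows "(\<lambda>v. \<Sum>x\<in>A. F x v) \<in> polyfun C"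
  using assms
proof (induction A rule: finite_induct)
  case empty
  then show ?case using pf_const[of 0] by simp
next
  case (insert x A)
  then have "(\<lambda>v. F x v + (\<Sum>x\<in>A. F x v)) \<in> polyfun C" by (intro pf_add) auto
  then show ?case using insert by simp
qed

lemma polyfun_prod:
  assumes "finite A" "\<And>x. x \<in> A \<Longrightarrow> F x \<in> polyfun C"
  shows "(\<lambda>v. \<Prod>x\<in>A. F x v) \<in> polyfun C"
  using assms
proof (induction A rule: finite_induct)
  case empty
  then show ?case using pf_const[of 1] by simp
next
  case (insert x A)
  then have "(\<lambda>v. F x v * (\<Prod>x\<in>A. F x v)) \<in> polyfun C" by (intro pf_mult) auto
  then show ?case using insert by simp
qed

definition syl_e :: "nat \<Rightarrow> nat \<Rightarrow> complex poly \<times> complex poly \<Rightarrow> nat \<Rightarrow> nat \<Rightarrow> complex" where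
  "syl_e na nb s i j = (if j < nb then (if j \<le> i \<and> i - j \<le> na then coeff (fst s) (i - j) else 0)
     else (if j - nb \<le> i \<and> i - (j - nb) \<le> nb then - coeff (snd s) (i - (j - nb)) else 0))"

definition syl_M :: "nat \<Rightarrow> nat \<Rightarrow> complex poly \<times> complex poly \<Rightarrow> complex mat" where
  "syl_M na nb s = mat (na + nb) (na + nb) (\<lambda>(i, j). syl_e na nb s i j)"

definition syl_D :: "nat \<Rightarrow> nat \<Rightarrow> complex poly \<times> complex poly \<Rightarrow> complex" where
  "syl_D na nb s = (\<Sum>p | p permutes {0..<na + nb}.
       of_int (sign p) * (\<Prod>i = 0..<na + nb. syl_e na nb s i (p i)))"

lemma syl_D_det: "syl_D na nb s = det (syl_M na nb s)"
proof -
  have c: "syl_M na nb s \<in> carrier_mat (na + nb) (na + nb)" unfolding syl_M_def by simp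
  show ?thesis unfolding det_def'[OF c] syl_D_def
  proof (rule sum.cong[OF refl])
    fix p assume "p \<in> {p. p permutes {0..<na + nb}}"
    then have "\<And>i. i < na + nb \<Longrightarrow> p i < na + nb" using permutes_in_image by fastforce
    then show "of_int (sign p) * (\<Prod>i = 0..<na + nb. syl_e na nb s i (p i)) =
        of_int (sign p) * (\<Prod>i = 0..<na + nb. syl_M na nb s $$ (i, p i))"
      unfolding syl_M_def by (auto intro!: prod.cong)
  qed
qed

lemma syl_e_polyfun:
  assumes "na = nat a" "nb = nat b" "0 \<le> a" "0 \<le> b"
  shows "(\<lambda>s. syl_e na nb s i j) \<in> polyfun (coord_funs a b)"
proof -
  have c1: "(\<lambda>s. coeff (fst s) k) \<in> polyfun (coord_funs a b)" if "k \<le> na" for k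
    by (rule pf_coord) (use that assms in \<open>auto simp: coord_funs_def intro!: exI[of _ k]\<close>)
  have c2: "(\<lambda>s. coeff (snd s) k) \<in> polyfun (coord_funs a b)" if "k \<le> nb" for k
    by (rule pf_coord) (use that assms in \<open>auto simp: coord_funs_def intro!: exI[of _ k]\<close>)
  have c3: "(\<lambda>s. - coeff (snd s) k) \<in> polyfun (coord_funs a b)" if "k \<le> nb" for k
    using pf_mult[OF pf_const[of "-1"] c2[OF that]] by simp
  show ?thesis
    unfolding syl_e_def using c1 c3 pf_const[of 0]
    by (cases "j < nb"; cases "j \<le> i \<and> i - j \<le> na"; cases "j - nb \<le> i \<and> i - (j - nb) \<le> nb") auto
qed

lemma syl_D_polyfun:
  assumes "na = nat a" "nb = nat b" "0 \<le> a" "0 \<le> b"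
  shows "syl_D na nb \<in> polyfun (coord_funs a b)"
proof -
  have "(\<lambda>s. \<Sum>p | p permutes {0..<na + nb}.
       of_int (sign p) * (\<Prod>i = 0..<na + nb. syl_e na nb s i (p i))) \<in> polyfun (coord_funs a b)"
  proof (rule polyfun_sum)
    show "finite {p. p permutes {0..<na + nb}}" by (simp add: finite_permutations)
    fix p
    show "(\<lambda>s. of_int (sign p) * (\<Prod>i = 0..<na + nb. syl_e na nb s i (p i))) \<in> polyfun (coord_funs a b)"
      by (intro pf_mult pf_const polyfun_prod syl_e_polyfun[OF assms]) simp
  qed
  then show ?thesis unfolding syl_D_def[abs_def] .
qed

definition Pv :: "nat \<Rightarrow> nat \<Rightarrow> complex vec \<Rightarrow> complex poly" where
  "Pv nb N v = (\<Sum>j<N. if j < nb then monom (v $ j) j else 0)"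

definition Qv :: "nat \<Rightarrow> nat \<Rightarrow> complex vec \<Rightarrow> complex poly" where
  "Qv nb N v = (\<Sum>j<N. if j < nb then 0 else monom (v $ j) (j - nb))"

lemma coeff_Pv: "coeff (Pv nb N v) k = (if k < nb \<and> k < N then v $ k else 0)"
proof -
  have "coeff (Pv nb N v) k = (\<Sum>j<N. if j = k then (if k < nb then v $ k else 0) else 0)"
    unfolding Pv_def coeff_sum by (intro sum.cong refl) (auto simp: coeff_monom)
  also have "\<dots> = (if k < nb \<and> k < N then v $ k else 0)" by (simp add: sum.delta)
  finally show ?thesis .
qed

lemma coeff_Qv: "coeff (Qv nb N v) k = (if k + nb < N then v $ (k + nb) else 0)"
proof -
  have "coeff (Qv nb N v) k = (\<Sum>j<N. if j = k + nb then v $ (k + nb) else 0)"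
    unfolding Qv_def coeff_sum by (intro sum.cong refl) (auto simp: coeff_monom)
  also have "\<dots> = (if k + nb < N then v $ (k + nb) else 0)" by (simp add: sum.delta)
  finally show ?thesis .
qed

lemma syl_mult_row:
  assumes f: "f = 0 \<or> degree f \<le> na" and g: "g = 0 \<or> degree g \<le> nb" and v: "v \<in> carrier_vec (na + nb)" and i: "i < na + nb"
  shows "(syl_M na nb (f, g) *\<^sub>v v) $ i = coeff (Pv nb (na + nb) v * f - Qv nb (na + nb) v * g) i"
proof -
  let ?N = "na + nb"
  have "(syl_M na nb (f, g) *\<^sub>v v) $ i = (\<Sum>j<?N. syl_e na nb (f, g) i j * v $ j)"
    using v i unfolding syl_M_def
    by (simp add: index_mult_mat_vec scalar_prod_def atLeast0LessThan)
  also have "\<dots> = (\<Sum>j<?N. (if j < nb then coeff (monom (v $ j) j * f) i else 0)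
        - (if j < nb then 0 else coeff (monom (v $ j) (j - nb) * g) i))"
  proof (intro sum.cong refl)
    fix j
    have z: "coeff f (i - j) = 0" if "na < i - j" using f that coeff_eq_0 by fastforce
    have z2: "coeff g k = 0" if "nb < k" for k using g that coeff_eq_0 by fastforce
    show "syl_e na nb (f, g) i j * v $ j = (if j < nb then coeff (monom (v $ j) j * f) i else 0)
        - (if j < nb then 0 else coeff (monom (v $ j) (j - nb) * g) i)"
      unfolding syl_e_def coeff_monom_mult using z z2
      by (auto simp: coeff_eq_0 not_le)
  qed
  also have "\<dots> = coeff (Pv nb ?N v * f - Qv nb ?N v * g) i"
    unfolding Pv_def Qv_def sum_distrib_right coeff_diff coeff_sum sum_subtractf
    by (intro arg_cong2[where f = "(-)"] sum.cong refl) auto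
  finally show ?thesis .
qed

lemma syl_kernel:
  assumes a1: "1 \<le> a" and b1: "1 \<le> b" and na: "na = nat a" and nb: "nb = nat b"
    and f: "f \<in> forms a" and g: "g \<in> forms b"
  shows "syl_D na nb (f, g) = 0 \<longleftrightarrow>
    (\<exists>p q. (p, q) \<noteq> (0, 0) \<and> p \<in> forms (b - 1) \<and> q \<in> forms (a - 1) \<and> p * f = q * g)"
proof -
  let ?N = "na + nb"
  have f': "f = 0 \<or> degree f \<le> na" using f na by (auto simp: forms_def)
  have g': "g = 0 \<or> degree g \<le> nb" using g nb by (auto simp: forms_def)
  have nb1: "1 \<le> nb" and na1: "1 \<le> na" using a1 b1 na nb by auto
  have c: "syl_M na nb (f, g) \<in> carrier_mat ?N ?N" unfolding syl_M_def by simp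
  have "syl_D na nb (f, g) = 0 \<longleftrightarrow>
     (\<exists>v. v \<in> carrier_vec ?N \<and> v \<noteq> 0\<^sub>v ?N \<and> syl_M na nb (f, g) *\<^sub>v v = 0\<^sub>v ?N)"
    unfolding syl_D_det using det_0_iff_vec_prod_zero[OF c] .
  also have "\<dots> \<longleftrightarrow> (\<exists>p q. (p, q) \<noteq> (0, 0) \<and> p \<in> forms (b - 1) \<and> q \<in> forms (a - 1) \<and> p * f = q * g)"
  proof
    assume "\<exists>v. v \<in> carrier_vec ?N \<and> v \<noteq> 0\<^sub>v ?N \<and> syl_M na nb (f, g) *\<^sub>v v = 0\<^sub>v ?N"
    then obtain v where v: "v \<in> carrier_vec ?N" "v \<noteq> 0\<^sub>v ?N" "syl_M na nb (f, g) *\<^sub>v v = 0\<^sub>v ?N" by blast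
    let ?p = "Pv nb ?N v" and ?q = "Qv nb ?N v"
    have dp: "degree ?p \<le> nb - 1" by (rule degree_le) (auto simp: coeff_Pv)
    have dq: "degree ?q \<le> na - 1" by (rule degree_le) (auto simp: coeff_Qv)
    have low: "coeff (?p * f - ?q * g) i = 0" if "i < ?N" for i
    proof -
      have "(syl_M na nb (f, g) *\<^sub>v v) $ i = 0" using v(3) that by simp
      then show ?thesis using syl_mult_row[OF f' g' v(1) that] by simp
    qed
    have "degree (?p * f - ?q * g) < ?N"
    proof -
      have "degree (?p * f) < ?N" using f' dp nb1 degree_mult_le[of ?p f] by auto
      moreover have "degree (?q * g) < ?N" using g' dq na1 degree_mult_le[of ?q g] by auto
      ultimately show ?thesis using degree_diff_le_max[of "?p * f" "?q * g"] by linarith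
    qed
    then have "?p * f - ?q * g = 0"
      by (intro poly_eqI) (metis coeff_0 coeff_eq_0 leI le_less_trans low)
    then have eq: "?p * f = ?q * g" by simp
    have nz: "(?p, ?q) \<noteq> (0, 0)"
    proof
      assume "(?p, ?q) = (0, 0)"
      then have p0: "?p = 0" and q0: "?q = 0" by auto
      have "v = 0\<^sub>v ?N"
      proof (rule eq_vecI)
        fix j assume "j < dim_vec (0\<^sub>v ?N)"
        then have j: "j < ?N" by simp
        show "v $ j = 0\<^sub>v ?N $ j"
        proof (cases "j < nb")
          case True
          then have "coeff ?p j = v $ j" using j by (simp add: coeff_Pv)
          then show ?thesis using p0 j by simp
        next
          case False
          then have "coeff ?q (j - nb) = v $ j" using j by (simp add: coeff_Qv)
          then show ?thesis using q0 j by simp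
        qed
      qed (use v in auto)
      then show False using v(2) by simp
    qed
    have "?p \<in> forms (b - 1)" using dp nb b1 by (auto simp: forms_def)
    moreover have "?q \<in> forms (a - 1)" using dq na a1 by (auto simp: forms_def)
    ultimately show "\<exists>p q. (p, q) \<noteq> (0, 0) \<and> p \<in> forms (b - 1) \<and> q \<in> forms (a - 1) \<and> p * f = q * g"
      using nz eq by blast
  next
    assume "\<exists>p q. (p, q) \<noteq> (0, 0) \<and> p \<in> forms (b - 1) \<and> q \<in> forms (a - 1) \<and> p * f = q * g"
    then obtain p q where pq: "(p, q) \<noteq> (0, 0)" "p \<in> forms (b - 1)" "q \<in> forms (a - 1)" "p * f = q * g"
      by blast
    define v where "v = vec ?N (\<lambda>j. if j < nb then coeff p j else coeff q (j - nb))"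
    have vc: "v \<in> carrier_vec ?N" unfolding v_def by simp
    have cp: "coeff p k = 0" if "nb \<le> k" for k
      using pq(2) that nb b1 by (auto simp: forms_def intro!: coeff_eq_0)
    have cq: "coeff q k = 0" if "na \<le> k" for k
      using pq(3) that na a1 by (auto simp: forms_def intro!: coeff_eq_0)
    have P: "Pv nb ?N v = p"
      by (rule poly_eqI) (auto simp: coeff_Pv v_def cp)
    have Q: "Qv nb ?N v = q"
      by (rule poly_eqI) (auto simp: coeff_Qv v_def cq)
    have "v \<noteq> 0\<^sub>v ?N"
    proof
      assume "v = 0\<^sub>v ?N"
      then have "Pv nb ?N v = 0" "Qv nb ?N v = 0"
        by (auto intro!: poly_eqI simp: coeff_Pv coeff_Qv)
      then show False using P Q pq(1) by simp
    qed
    moreover have "syl_M na nb (f, g) *\<^sub>v v = 0\<^sub>v ?N"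
    proof (rule eq_vecI)
      fix i assume "i < dim_vec (0\<^sub>v ?N)"
      then have i: "i < ?N" by simp
      show "(syl_M na nb (f, g) *\<^sub>v v) $ i = 0\<^sub>v ?N $ i"
        using syl_mult_row[OF f' g' vc i] P Q pq(4) i by simp
    qed (simp add: syl_M_def)
    ultimately show "\<exists>v. v \<in> carrier_vec ?N \<and> v \<noteq> 0\<^sub>v ?N \<and> syl_M na nb (f, g) *\<^sub>v v = 0\<^sub>v ?N"
      using vc by blast
  qed
  finally show ?thesis .
qed


lemma stratum_iff:
  assumes "1 \<le> a" "1 \<le> b" "1 \<le> d"
  shows "(f, g) \<in> stratum a b d \<longleftrightarrow> (f, g) \<in> sections a b \<and> (f, g) \<noteq> (0, 0) \<and> deg_L a b (f, g) = d"
  using res_iff[OF assms(1,2)] assms(3) unfolding stratum_def by auto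

lemma degL_f_nz:
  assumes s: "(f, g) \<in> sections a b" "(f, g) \<noteq> (0, 0)" and f0: "f \<noteq> 0"
  shows "deg_L a b (f, g) \<le> a"
proof -
  have "gcd f g dvd f" by simp
  then have "degree (gcd f g) \<le> degree f" using f0 dvd_imp_degree_le by blast
  moreover have "kap a b f g \<le> a - int (degree f)" using f0 unfolding kap_def by auto
  ultimately show ?thesis using deg_L_formula[OF s] by linarith
qed

lemma degL_f_0:
  assumes s: "(0, g) \<in> sections a b" "(0, g) \<noteq> (0::complex poly, 0)"
  shows "deg_L a b (0, g) = b"
  using deg_L_formula[OF s] by (simp add: kap_def degree_gcd_normalize)

lemma kernel_res:
  assumes s: "(f, g) \<in> sections a b" "(f, g) \<noteq> (0, 0)"
    and pq: "(p, q) \<noteq> (0, 0)" "p \<in> forms (b - 1)" "q \<in> forms (a - 1)" "p * f = q * g"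
  shows "(f, g) \<in> resonance a b"
proof (cases "wedge_nonzero (f, g) (q, p)")
  case True
  have "(q, p) \<in> sections a b" using pq by (auto simp: sections_iff forms_iff)
  moreover have "det_wedge (f, g) (q, p) = 0" unfolding det_wedge_def using pq(4) by (simp add: mult.commute)
  ultimately show ?thesis unfolding resonance_def using s True by auto
next
  case False
  then obtain c d :: complex where cd: "Polynomial.smult c f + Polynomial.smult d q = 0" "Polynomial.smult c g + Polynomial.smult d p = 0" "\<not> (c = 0 \<and> d = 0)"
    unfolding wedge_nonzero_def by auto
  have c0: "c \<noteq> 0"
  proof
    assume "c = 0"
    then have "d \<noteq> 0" using cd by simp
    then have "q = 0" "p = 0" using cd \<open>c = 0\<close> by auto
    then show False using pq by simp
  qed
  have "f = Polynomial.smult (- d / c) q"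
  proof (rule poly_eqI)
    fix n
    have "c * coeff f n + d * coeff q n = 0" using arg_cong[OF cd(1), of "\<lambda>p. coeff p n"] by simp
    then show "coeff f n = coeff (Polynomial.smult (- d / c) q) n" using c0 by (simp add: field_simps eq_neg_iff_add_eq_0)
  qed
  moreover have "g = Polynomial.smult (- d / c) p"
  proof (rule poly_eqI)
    fix n
    have "c * coeff g n + d * coeff p n = 0" using arg_cong[OF cd(2), of "\<lambda>p. coeff p n"] by simp
    then show "coeff g n = coeff (Polynomial.smult (- d / c) p) n" using c0 by (simp add: field_simps eq_neg_iff_add_eq_0)
  qed
  ultimately have "f \<in> forms (a - 1)" "g \<in> forms (b - 1)" using pq
    by (auto simp: forms_iff intro: order_trans[OF _ degree_smult_le])
  then have "Pd a b 1 (f, g)" unfolding Pd_def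
    by (intro bexI[of _ 1]) (auto intro!: bexI[of _ "(f, g)"] simp: sections_iff forms_iff)
  then show ?thesis using P1_res s(2) by blast
qed

lemma res_kernel:
  assumes r: "(f, g) \<in> resonance a b" and a1: "1 \<le> a" and b1: "1 \<le> b"
  shows "\<exists>p q. (p, q) \<noteq> (0, 0) \<and> p \<in> forms (b - 1) \<and> q \<in> forms (a - 1) \<and> p * f = q * g"
proof -
  have s: "(f, g) \<in> sections a b" "(f, g) \<noteq> (0, 0)" "1 \<le> deg_L a b (f, g)" using res_iff[OF a1 b1] r by auto
  have "Pd a b 1 (f, g)" using degL_ge1_P1[OF s] .
  then obtain h t1 t2 where h: "h \<noteq> 0" and t: "(t1, t2) \<in> sections (a - 1) (b - 1)"
    and f: "f = h * t1" and g: "g = h * t2"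
    unfolding Pd_def by auto
  have "(t2, t1) \<noteq> (0, 0)" using s f g by auto
  moreover have "t2 * f = t1 * g" using f g by (simp add: ac_simps)
  ultimately show ?thesis using t by (auto simp: sections_iff)
qed

lemma witness_d:
  assumes a1: "1 \<le> a" and ab: "a \<le> b" and d: "1 \<le> d" "d \<le> a"
  shows "(1, monom 1 (nat (b - d))) \<in> stratum a b d"
proof -
  have b1: "1 \<le> b" using a1 ab by simp
  have dm: "degree (monom (1::complex) (nat (b - d))) = nat (b - d)" by (simp add: degree_monom_eq)
  have sec: "(1, monom 1 (nat (b - d))) \<in> sections a b" using dm a1 d ab by (auto simp: sections_iff forms_iff)
  have nz: "(1::complex poly, monom 1 (nat (b - d))) \<noteq> (0, 0)" by simp
  have "deg_L a b (1, monom 1 (nat (b - d))) = d"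
    using deg_L_formula[OF sec nz] dm d ab unfolding kap_def by auto
  then show ?thesis using stratum_iff[OF a1 b1 d(1)] sec nz by simp
qed

lemma witness_b:
  assumes a1: "1 \<le> a" and ab: "a \<le> b"
  shows "(0, 1) \<in> stratum a b b"
proof -
  have b1: "1 \<le> b" using a1 ab by simp
  have sec: "(0, 1) \<in> sections a b" using a1 b1 by (auto simp: sections_iff forms_iff)
  have nz: "(0::complex poly, 1::complex poly) \<noteq> (0, 0)" by simp
  have "deg_L a b (0, 1) = b" using degL_f_0[OF sec nz] .
  then show ?thesis using stratum_iff[OF a1 b1 b1] sec nz by simp
qed

lemma conj1:
  assumes a1: "1 \<le> a" and ab: "a \<le> b"
  shows "stratum a b d \<noteq> {} \<longleftrightarrow> (1 \<le> d \<and> d \<le> a) \<or> d = b"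
proof
  assume "stratum a b d \<noteq> {}"
  then obtain f g where s: "(f, g) \<in> stratum a b d" by auto
  have b1: "1 \<le> b" using a1 ab by simp
  have r: "(f, g) \<in> resonance a b" and dd: "deg_L a b (f, g) = d" using s unfolding stratum_def by auto
  then have s': "(f, g) \<in> sections a b" "(f, g) \<noteq> (0, 0)" "1 \<le> d" using res_iff[OF a1 b1] by auto
  show "(1 \<le> d \<and> d \<le> a) \<or> d = b"
  proof (cases "f = 0")
    case True
    then show ?thesis using degL_f_0 s' dd by auto
  next
    case False
    then show ?thesis using degL_f_nz[OF s'(1,2) False] dd s'(3) by auto
  qed
next
  assume "(1 \<le> d \<and> d \<le> a) \<or> d = b"
  then show "stratum a b d \<noteq> {}" using witness_d[OF a1 ab] witness_b[OF a1 ab] by blast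
qed

lemma stratum_sub: "stratum a b d \<subseteq> sections a b - {(0, 0)}"
  unfolding stratum_def resonance_def by auto

lemma strat_b_fst:
  assumes a1: "1 \<le> a" and ab: "a < b" and s: "(f, g) \<in> stratum a b b"
  shows "f = 0"
proof (rule ccontr)
  assume "f \<noteq> 0"
  have "(f, g) \<in> sections a b" "(f, g) \<noteq> (0, 0)" "deg_L a b (f, g) = b"
    using s unfolding stratum_def resonance_def by auto
  then show False using degL_f_nz \<open>f \<noteq> 0\<close> ab by fastforce
qed

lemma prop_degL:
  assumes s: "(f, Polynomial.smult c f) \<in> sections a a" and f0: "f \<noteq> 0" and c0: "c \<noteq> 0"
  shows "deg_L a a (f, Polynomial.smult c f) = a"
proof -
  have nz: "(f, Polynomial.smult c f) \<noteq> (0, 0)" using f0 by simp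
  have "f dvd Polynomial.smult c f" by (intro dvd_smult dvd_refl)
  then have "gcd f (Polynomial.smult c f) = normalize f" by (simp add: gcd_proj1_iff)
  then have "degree (gcd f (Polynomial.smult c f)) = degree f" by (simp add: degree_gcd_normalize)
  then show ?thesis using deg_L_formula[OF s nz] f0 c0 unfolding kap_def by simp
qed

lemma g0_degL:
  assumes s: "(f, 0) \<in> sections a b" and f0: "f \<noteq> 0"
  shows "deg_L a b (f, 0) = a"
proof -
  have nz: "(f, 0) \<noteq> (0, 0)" using f0 by simp
  show ?thesis using deg_L_formula[OF s nz] f0 unfolding kap_def by (simp add: degree_gcd_normalize)
qed

lemma strat_aa_prop:
  assumes s: "(f, g) \<in> stratum a a a" and f0: "f \<noteq> 0" and g0: "g \<noteq> 0"
  shows "\<exists>c. g = Polynomial.smult c f"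
proof -
  have s': "(f, g) \<in> sections a a" "(f, g) \<noteq> (0, 0)" "deg_L a a (f, g) = a"
    using s unfolding stratum_def resonance_def by auto
  let ?G = "gcd f g"
  have G0: "?G \<noteq> 0" using f0 by simp
  have dGf: "degree ?G \<le> degree f" using f0 dvd_imp_degree_le by (metis gcd_dvd1)
  have dGg: "degree ?G \<le> degree g" using g0 dvd_imp_degree_le by (metis gcd_dvd2)
  have "int (degree ?G) + min (a - int (degree f)) (a - int (degree g)) = a"
    using deg_L_formula[OF s'(1,2)] s'(3) f0 g0 unfolding kap_def by simp
  then have ef: "degree ?G = degree f" and eg: "degree ?G = degree g" using dGf dGg by linarith+
  obtain k where k: "f = ?G * k" by (meson dvd_def gcd_dvd1)
  obtain k' where k': "g = ?G * k'" by (meson dvd_def gcd_dvd2)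
  have "k \<noteq> 0" "k' \<noteq> 0" using k k' f0 g0 by auto
  then have "degree k = 0" "degree k' = 0" using k k' ef eg G0 degree_mult_eq by (metis add_left_imp_eq add_0_right)+
  then obtain k0 k1 where "k = [:k0:]" "k' = [:k1:]" using degree0_coeffs by metis
  then have "k0 \<noteq> 0" using \<open>k \<noteq> 0\<close> by simp
  define G where "G = ?G"
  have fG: "f = Polynomial.smult k0 G" using k \<open>k = [:k0:]\<close> unfolding G_def by simp
  have gG: "g = Polynomial.smult k1 G" using k' \<open>k' = [:k1:]\<close> unfolding G_def by simp
  have "Polynomial.smult (k1 / k0) (Polynomial.smult k0 G) = Polynomial.smult k1 G"
    using \<open>k0 \<noteq> 0\<close> by (simp add: smult_smult)
  then have "g = Polynomial.smult (k1 / k0) f" using fG gG by simp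
  then show ?thesis by blast
qed

lemma minor_polyfun:
  assumes "int i \<le> a" "int j \<le> a" "int i \<le> b" "int j \<le> b"
  shows "(\<lambda>s. coeff (fst s) i * coeff (snd s) j - coeff (fst s) j * coeff (snd s) i) \<in> polyfun (coord_funs a b)"
proof -
  have "(\<lambda>s. coeff (fst s) i * coeff (snd s) j + (- 1) * (coeff (fst s) j * coeff (snd s) i)) \<in> polyfun (coord_funs a b)"
    using assms by (intro pf_add pf_mult pf_const coord_fst coord_snd)
  then show ?thesis by simp
qed

lemma conj2:
  assumes a1: "1 \<le> a" and ab: "a \<le> b"
  shows "stratum a b b = proj_closure a b (stratum a b b)"
proof
  show "stratum a b b \<subseteq> proj_closure a b (stratum a b b)" by (rule closure_incl[OF stratum_sub])
next
  have b1: "1 \<le> b" using a1 ab by simp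
  show "proj_closure a b (stratum a b b) \<subseteq> stratum a b b"
  proof
    fix v assume vin: "v \<in> proj_closure a b (stratum a b b)"
    obtain f g where v: "v = (f, g)" by (cases v)
    have sec: "(f, g) \<in> sections a b" "(f, g) \<noteq> (0, 0)" using closure_sub vin v by blast+
    have fa: "f = 0 \<or> int (degree f) \<le> a" and gb: "g = 0 \<or> int (degree g) \<le> b"
      using sec(1) by (auto simp: sections_iff forms_iff)
    have "deg_L a b (f, g) = b"
    proof (cases "a < b")
      case True
      have c0: "coeff f i = 0" if "int i \<le> a" for i
      proof -
        have "\<forall>x\<in>stratum a b b. coeff (fst x) i = 0" using strat_b_fst[OF a1 True] by force
        then show ?thesis using closure_poly[OF vin coord_fst[OF that]] v by simp
      qed
      have "f = 0"
      proof (rule poly_eqI)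
        fix i show "coeff f i = coeff 0 i"
        proof (cases "int i \<le> a")
          case False
          then show ?thesis using fa by (cases "f = 0") (auto intro!: coeff_eq_0)
        qed (simp add: c0)
      qed
      then show ?thesis using degL_f_0 sec by simp
    next
      case False
      then have ba: "b = a" using ab by simp
      show ?thesis
      proof (cases "f = 0")
        case True
        then show ?thesis using degL_f_0 sec by simp
      next
        case f0: False
        define i0 where "i0 = degree f"
        have i0a: "int i0 \<le> a" using fa f0 unfolding i0_def by simp
        have lc: "coeff f i0 \<noteq> 0" using f0 unfolding i0_def by simp
        have mv: "\<forall>x\<in>stratum a b b. coeff (fst x) i * coeff (snd x) j - coeff (fst x) j * coeff (snd x) i = 0"
          for i j
        proof
          fix x assume x: "x \<in> stratum a b b"
          obtain f' g' where x': "x = (f', g')" by (cases x)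
          show "coeff (fst x) i * coeff (snd x) j - coeff (fst x) j * coeff (snd x) i = 0"
          proof (cases "f' = 0 \<or> g' = 0")
            case True then show ?thesis using x' by auto
          next
            case False
            then obtain c where "g' = Polynomial.smult c f'"
              using strat_aa_prop[of f' g' a] x x' ba by auto
            then show ?thesis using x' by simp
          qed
        qed
        have minor: "coeff f i0 * coeff g j - coeff f j * coeff g i0 = 0" if "int j \<le> a" for j
          using closure_poly[OF vin minor_polyfun[of i0 a j b] mv] i0a that ba v by simp
        define c where "c = coeff g i0 / coeff f i0"
        have gc: "g = Polynomial.smult c f"
        proof (rule poly_eqI)
          fix j show "coeff g j = coeff (Polynomial.smult c f) j"
          proof (cases "int j \<le> a")
            case True
            then show ?thesis using minor[OF True] lc unfolding c_def by (simp add: field_simps)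
          next
            case False
            then show ?thesis using fa gb ba by (auto intro!: coeff_eq_0 simp: coeff_eq_0)
          qed
        qed
        show ?thesis
        proof (cases "c = 0")
          case True
          then have "g = 0" using gc by simp
          then show ?thesis using g0_degL[of f a b] sec f0 ba by simp
        next
          case False
          then show ?thesis using prop_degL[of f c a] sec f0 gc ba by simp
        qed
      qed
    qed
    then show "v \<in> stratum a b b" using stratum_iff[OF a1 b1 b1] sec v by simp
  qed
qed

lemma conj3:
  assumes a1: "1 \<le> a" and ab: "a \<le> b"
  shows "proj_closure a b (stratum a b b) \<subseteq> proj_closure a b (stratum a b a)"
proof (cases "a = b")
  case False
  then have ab': "a < b" using ab by simp
  have b1: "1 \<le> b" using a1 ab by simp
  show ?thesis
  proof (rule closure_trans, rule subsetI)
    fix s assume s: "s \<in> stratum a b b"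
    obtain f g where sfg: "s = (f, g)" by (cases s)
    have f0: "f = 0" using strat_b_fst[OF a1 ab'] s sfg by simp
    have sec: "(0, g) \<in> sections a b" "(0, g) \<noteq> (0::complex poly, 0)" using s sfg f0 stratum_sub by blast+
    then have g0: "g \<noteq> 0" and gb: "int (degree g) \<le> b" by (auto simp: sections_iff forms_iff)
    obtain w where w: "\<forall>c. c \<noteq> 0 \<longrightarrow> lin (0, g) w c \<in> sections a b \<and> lin (0, g) w c \<noteq> (0, 0)
           \<and> deg_L a b (lin (0, g) w c) = a" using family_b[OF a1 ab g0 gb] by blast
    have "\<forall>c. c \<noteq> 0 \<longrightarrow> lin (0, g) w c \<in> stratum a b a"
    proof (intro allI impI)
      fix c :: complex assume "c \<noteq> 0"
      then show "lin (0, g) w c \<in> stratum a b a"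
        using w stratum_iff[OF a1 b1 a1] by (cases "lin (0, g) w c") auto
    qed
    then show "s \<in> proj_closure a b (stratum a b a)" using closure_line[OF sec] sfg f0 by simp
  qed
qed simp

lemma conj4_step:
  assumes a1: "1 \<le> a" and ab: "a \<le> b" and d: "1 \<le> d" "d < a"
  shows "stratum a b (d + 1) \<subseteq> proj_closure a b (stratum a b d)"
proof
  have b1: "1 \<le> b" using a1 ab by simp
  fix s assume s: "s \<in> stratum a b (d + 1)"
  obtain f g where sfg: "s = (f, g)" by (cases s)
  have s': "(f, g) \<in> sections a b" "(f, g) \<noteq> (0, 0)" "deg_L a b (f, g) = d + 1"
    using s sfg stratum_iff[OF a1 b1, of "d + 1"] d by auto
  obtain w where w: "\<forall>c. c \<noteq> 0 \<longrightarrow> lin (f, g) w c \<in> sections a b \<and> lin (f, g) w c \<noteq> (0, 0)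
           \<and> deg_L a b (lin (f, g) w c) = deg_L a b (f, g) - 1"
    using family_down[OF a1 ab s'(1,2)] s'(3) d by auto
  have "\<forall>c. c \<noteq> 0 \<longrightarrow> lin (f, g) w c \<in> stratum a b d"
  proof (intro allI impI)
    fix c :: complex assume "c \<noteq> 0"
    then show "lin (f, g) w c \<in> stratum a b d"
      using w stratum_iff[OF a1 b1 d(1)] s'(3) by (cases "lin (f, g) w c") auto
  qed
  then show "s \<in> proj_closure a b (stratum a b d)" using closure_line[OF s'(1,2)] sfg by simp
qed

lemma chain:
  assumes a1: "1 \<le> a" and ab: "a \<le> b" and n: "1 \<le> n"
  shows "n \<le> a \<longrightarrow> stratum a b n \<subseteq> proj_closure a b (stratum a b 1)"
  using n
proof (induction n rule: int_ge_induct)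
  case base
  then show ?case using closure_incl[OF stratum_sub] by blast
next
  case (step i)
  show ?case
  proof
    assume "i + 1 \<le> a"
    then have "stratum a b (i + 1) \<subseteq> proj_closure a b (stratum a b i)"
      using conj4_step[OF a1 ab step(1)] by simp
    also have "\<dots> \<subseteq> proj_closure a b (stratum a b 1)"
      using closure_trans step \<open>i + 1 \<le> a\<close> by simp
    finally show "stratum a b (i + 1) \<subseteq> proj_closure a b (stratum a b 1)" .
  qed
qed

lemma theta_res:
  assumes a1: "1 \<le> a" and b1: "1 \<le> b"
  shows "theta1_image a b = resonance a b"
proof
  show "theta1_image a b \<subseteq> resonance a b"
  proof
    fix s assume "s \<in> theta1_image a b"
    then obtain h \<alpha> where s: "s = (h * fst \<alpha>, h * snd \<alpha>)" and h: "h \<in> forms 1" "h \<noteq> 0"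
      and \<alpha>: "\<alpha> \<in> sections (a - 1) (b - 1)" "\<alpha> \<noteq> (0, 0)"
      unfolding theta1_image_def by blast
    have "Pd a b 1 s" unfolding Pd_def using s h \<alpha> by auto
    moreover have "s \<noteq> (0, 0)" using s h \<alpha> by (cases \<alpha>) auto
    ultimately show "s \<in> resonance a b" using P1_res by (cases s) auto
  qed
next
  show "resonance a b \<subseteq> theta1_image a b"
  proof
    fix s assume r: "s \<in> resonance a b"
    obtain f g where sfg: "s = (f, g)" by (cases s)
    have s': "(f, g) \<in> sections a b" "(f, g) \<noteq> (0, 0)" "1 \<le> deg_L a b (f, g)"
      using r sfg res_iff[OF a1 b1] by auto
    have "Pd a b 1 (f, g)" using degL_ge1_P1[OF s'] .
    then obtain h t where h: "h \<in> forms 1" "h \<noteq> 0" and t: "t \<in> sections (a - 1) (b - 1)"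
      and eq: "(f, g) = (h * fst t, h * snd t)" unfolding Pd_def by auto
    have "t \<noteq> (0, 0)" using eq s'(2) by auto
    then show "s \<in> theta1_image a b" unfolding theta1_image_def using h t eq sfg by blast
  qed
qed

lemma conj5:
  assumes a1: "1 \<le> a" and ab: "a \<le> b"
  shows "resonance a b = proj_closure a b (stratum a b 1)"
proof
  have b1: "1 \<le> b" using a1 ab by simp
  show "resonance a b \<subseteq> proj_closure a b (stratum a b 1)"
  proof
    fix s assume r: "s \<in> resonance a b"
    define n where "n = deg_L a b s"
    have sn: "s \<in> stratum a b n" using r unfolding stratum_def n_def by simp
    then have "(1 \<le> n \<and> n \<le> a) \<or> n = b" using conj1[OF a1 ab] by blast
    then show "s \<in> proj_closure a b (stratum a b 1)"
    proof
      assume "1 \<le> n \<and> n \<le> a"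
      then show ?thesis using chain[OF a1 ab, of n] sn by blast
    next
      assume nb: "n = b"
      have "stratum a b b \<subseteq> proj_closure a b (stratum a b b)" by (rule closure_incl[OF stratum_sub])
      also have "\<dots> \<subseteq> proj_closure a b (stratum a b a)" by (rule conj3[OF a1 ab])
      also have "\<dots> \<subseteq> proj_closure a b (stratum a b 1)"
        using closure_trans chain[OF a1 ab a1] by simp
      finally show ?thesis using sn nb by blast
    qed
  qed
next
  have b1: "1 \<le> b" using a1 ab by simp
  show "proj_closure a b (stratum a b 1) \<subseteq> resonance a b"
  proof
    fix v assume vin: "v \<in> proj_closure a b (stratum a b 1)"
    obtain f g where v: "v = (f, g)" by (cases v)
    have sec: "(f, g) \<in> sections a b" "(f, g) \<noteq> (0, 0)" using closure_sub vin v by blast+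
    let ?D = "syl_D (nat a) (nat b)"
    have Dp: "?D \<in> polyfun (coord_funs a b)" using syl_D_polyfun a1 b1 by simp
    have van: "\<forall>x\<in>stratum a b 1. ?D x = 0"
    proof
      fix x assume x: "x \<in> stratum a b 1"
      obtain f' g' where x': "x = (f', g')" by (cases x)
      have r: "(f', g') \<in> resonance a b" using x x' unfolding stratum_def by simp
      then have "(f', g') \<in> sections a b" unfolding resonance_def by simp
      then have "f' \<in> forms a" "g' \<in> forms b" by (auto simp: sections_iff)
      then show "?D x = 0" using syl_kernel[OF a1 b1 refl refl] res_kernel[OF r a1 b1] x' by blast
    qed
    have "?D (f, g) = 0" using closure_poly[OF vin Dp van] v by simp
    moreover have "f \<in> forms a" "g \<in> forms b" using sec by (auto simp: sections_iff)
    ultimately obtain p q where "(p, q) \<noteq> (0, 0)" "p \<in> forms (b - 1)" "q \<in> forms (a - 1)" "p * f = q * g"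
      using syl_kernel[OF a1 b1 refl refl] by blast
    then show "v \<in> resonance a b" using kernel_res[OF sec] v by simp
  qed
qed

theorem proposition4p8:
  fixes a b :: int
  assumes "1 \<le> a" and "a \<le> b"
  shows "(\<forall>d::int. stratum a b d \<noteq> {} \<longleftrightarrow> (1 \<le> d \<and> d \<le> a) \<or> d = b)
    \<and> stratum a b b = proj_closure a b (stratum a b b)
    \<and> proj_closure a b (stratum a b b) \<subseteq> proj_closure a b (stratum a b a)
    \<and> (\<forall>d::int. 1 \<le> d \<and> d < a \<longrightarrow>
          proj_closure a b (stratum a b (d + 1)) \<subseteq> proj_closure a b (stratum a b d))
    \<and> resonance a b = proj_closure a b (stratum a b 1)
    \<and> proj_closure a b (stratum a b 1) = theta1_image a b"
proof (intro conjI allI impI)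
  have b1: "1 \<le> b" using assms by simp
  fix d :: int
  show "stratum a b d \<noteq> {} \<longleftrightarrow> (1 \<le> d \<and> d \<le> a) \<or> d = b" by (rule conj1[OF assms])
next
  show "stratum a b b = proj_closure a b (stratum a b b)" by (rule conj2[OF assms])
next
  show "proj_closure a b (stratum a b b) \<subseteq> proj_closure a b (stratum a b a)" by (rule conj3[OF assms])
next
  fix d :: int assume "1 \<le> d \<and> d < a"
  then show "proj_closure a b (stratum a b (d + 1)) \<subseteq> proj_closure a b (stratum a b d)"
    using closure_trans conj4_step[OF assms] by blast
next
  show "resonance a b = proj_closure a b (stratum a b 1)" by (rule conj5[OF assms])
next
  have b1: "1 \<le> b" using assms by simp
  show "proj_closure a b (stratum a b 1) = theta1_image a b"
    using conj5[OF assms] theta_res[OF assms(1) b1] by simp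
qed

end
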